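(* Let $n\geq 2$ be an integer, $b:=-n+i$, $D=\{0,m\}$ with $2\le m\le n^2$. Let $\alpha\in E_{n,D}$ and suppose there is exactly one sequence $(\alpha_j)_{j\ge1}$ with $\alpha_j\in\{0,\pm m\}$ and $\alpha=\sum_{j\ge1}\alpha_jb^{-j}$. Let $\gamma:=\sum_{j\ge1}\gamma_jb^{-j}$ where $\gamma_j:=\min(D\cap(D+\alpha_j))$, and let $C(\alpha):=C_{n,D}\cap(C_{n,D}+\alpha)$. (a) If $C(\alpha)$ is self-similar and is the attractor of an IFS (finite family of contracting similarities) containing a similarity of the form $f(x)=rx+(1-r)\gamma$, then $(m-|\alpha_j|)_{j\ge1}$ is strongly eventually periodic. (b) Conversely, if $(m-|\alpha_j|)_{j\ge1}$ is strongly eventually periodic, written as $a_1,\ldots,a_p$ followed by the infinite repetition of $a_1+u_1,\ldots,a_p+u_p$ (with $u_\ell\ge0$), then $C(\alpha)$ is self-similar and is the attractor of the IFS consisting of all maps of the form $$f(x)=b^{-p}\Big(x+\sum_{\ell=1}^p\big(y_\ell b^{p-\ell}+z_\ell b^{-\ell}\big)-\gamma\Big)+\gamma,$$ where for each $\ell$, $y_\ell,z_\ell\in\{0,m\}$ with $y_\ell\le a_\ell$ and $z_\ell\le u_\ell$.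
   Context: $C_{n,D}$ is the attractor of $\{z\mapsto b^{-1}(z+d): d\in D\}$, i.e. $C_{n,D}=\{\sum_{j\ge1}d_jb^{-j}: d_j\in D\}$. $E_{n,D}$ is the attractor of $\{z\mapsto b^{-1}(z+\delta):\delta\in D-D\}$. A set is self-similar if it is the attractor of a finite family of contracting similarities. A sequence $(a_j)_{j\ge1}$ of integers is strongly eventually periodic (SEP) if there exist $p\ge1$, integers $(b_\ell)_{\ell=1}^p$ and nonnegative integers $(c_\ell)_{\ell=1}^p$ such that $(a_j)$ equals $b_1,\ldots,b_p$ followed by the infinite repetition of $b_1+c_1,\ldots,b_p+c_p$. *)

theory Defs
  imports "HOL-Analysis.Analysis"
begin

definition bb :: "nat \<Rightarrow> complex" where
  "bb n = Complex (- real n) 1"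

text \<open>Radix expansion sum_{j>=1} d_j b^{-j}; index 0 of the sequence is ignored.\<close>
definition radix_val :: "nat \<Rightarrow> (nat \<Rightarrow> int) \<Rightarrow> complex" where
  "radix_val n d = (\<Sum>j. of_int (d (Suc j)) / (bb n) ^ (Suc j))"

definition Cset :: "nat \<Rightarrow> int set \<Rightarrow> complex set" where
  "Cset n D = {radix_val n d | d. \<forall>j\<ge>1. d j \<in> D}"

text \<open>E_{n,D}: attractor of the maps z -> b^{-1}(z+delta), delta in D-D,
  i.e. the digit set with digits in D - D.\<close>
definition Eset :: "nat \<Rightarrow> int set \<Rightarrow> complex set" where
  "Eset n D = Cset n {x - y | x y. x \<in> D \<and> y \<in> D}"

definition contracting_similarity :: "(complex \<Rightarrow> complex) \<Rightarrow> bool" where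
  "contracting_similarity f \<longleftrightarrow>
     (\<exists>r. 0 < r \<and> r < 1 \<and> (\<forall>x y. dist (f x) (f y) = r * dist x y))"

definition ifs_attractor :: "(complex \<Rightarrow> complex) set \<Rightarrow> complex set \<Rightarrow> bool" where
  "ifs_attractor F K \<longleftrightarrow> finite F \<and> F \<noteq> {} \<and> (\<forall>f\<in>F. contracting_similarity f) \<and>
     K \<noteq> {} \<and> compact K \<and> K = (\<Union>f\<in>F. f ` K)"

definition self_similar :: "complex set \<Rightarrow> bool" where
  "self_similar K \<longleftrightarrow> (\<exists>F. ifs_attractor F K)"

definition SEP :: "(nat \<Rightarrow> int) \<Rightarrow> bool" where
  "SEP a \<longleftrightarrow> (\<exists>p\<ge>1. \<exists>bs cs :: nat \<Rightarrow> int.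
      (\<forall>l\<in>{1..p}. cs l \<ge> 0) \<and> (\<forall>l\<in>{1..p}. a l = bs l) \<and>
      (\<forall>k\<ge>1. \<forall>l\<in>{1..p}. a (k * p + l) = bs l + cs l))"

end

theory Submission
  imports Defs
begin


lemma norm_bb: "cmod (bb n) = sqrt (real n ^ 2 + 1)"
  by (simp add: bb_def complex_norm)

lemma bb_gt2: assumes "n \<ge> 2" shows "2 < cmod (bb n)"
proof -
  have "real n \<ge> 2" using assms by simp
  hence "real n ^ 2 \<ge> 2^2" by (rule power_mono) simp
  hence "2^2 < real n ^ 2 + 1" by simp
  hence "2 < sqrt (real n ^ 2 + 1)" by (rule real_less_rsqrt)
  thus ?thesis by (simp add: norm_bb)
qed

lemma bb_nz: "bb n \<noteq> 0"
  by (simp add: bb_def complex_eq_iff)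

definition rterm :: "nat \<Rightarrow> (nat \<Rightarrow> int) \<Rightarrow> nat \<Rightarrow> complex" where
  "rterm n c = (\<lambda>j. of_int (c (Suc j)) / bb n ^ Suc j)"

lemma radix_val_rterm: "radix_val n c = suminf (rterm n c)"
  unfolding radix_val_def rterm_def by (rule refl)

lemma rterm_bound:
  assumes "\<forall>j\<ge>1. \<bar>c j\<bar> \<le> (M::int)"
  shows "norm (rterm n c j) \<le> of_int M * (1 / cmod (bb n)) ^ Suc j"
proof -
  have "norm (rterm n c j) = \<bar>real_of_int (c (Suc j))\<bar> / cmod (bb n) ^ Suc j"
    by (simp add: rterm_def norm_divide norm_power del: power_Suc)
  also have "\<dots> \<le> of_int M / cmod (bb n) ^ Suc j"
  proof (intro divide_right_mono)
    have "\<bar>c (Suc j)\<bar> \<le> M" using assms by auto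
    thus "\<bar>real_of_int (c (Suc j))\<bar> \<le> real_of_int M" by linarith
  qed simp
  finally show ?thesis by (simp add: power_one_over)
qed

lemma radix_summable:
  assumes "1 < cmod (bb n)" "\<forall>j\<ge>1. \<bar>c j\<bar> \<le> (M::int)"
  shows "summable (rterm n c)"
proof (rule summable_norm_cancel, rule summable_norm_comparison_test)
  show "\<exists>N. \<forall>j\<ge>N. norm (rterm n c j) \<le> of_int M * (1 / cmod (bb n)) ^ Suc j"
    using rterm_bound[OF assms(2)] by blast
  have "summable (\<lambda>j. (1 / cmod (bb n)) ^ j)"
    using assms(1) by (intro summable_geometric) (auto simp: divide_simps)
  hence "summable (\<lambda>j. (1 / cmod (bb n)) ^ Suc j)"
    using summable_ignore_initial_segment[of _ 1] by simp
  thus "summable (\<lambda>j. of_int M * (1 / cmod (bb n)) ^ Suc j)"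
    by (rule summable_mult)
qed

lemma radix_sums:
  assumes "1 < cmod (bb n)" "\<forall>j\<ge>1. \<bar>c j\<bar> \<le> (M::int)"
  shows "rterm n c sums radix_val n c"
  using radix_summable[OF assms] by (simp add: radix_val_rterm summable_sums)

lemma radix_cong: "(\<forall>j\<ge>1. c j = d j) \<Longrightarrow> radix_val n c = radix_val n d"
  unfolding radix_val_def by simp

lemma radix_zero: "(\<forall>j\<ge>1. c j = 0) \<Longrightarrow> radix_val n c = 0"
  unfolding radix_val_def by simp

lemma radix_add:
  assumes "1 < cmod (bb n)" "\<forall>j\<ge>1. \<bar>c j\<bar> \<le> (M::int)" "\<forall>j\<ge>1. \<bar>d j\<bar> \<le> (M'::int)"
  shows "radix_val n (\<lambda>j. c j + d j) = radix_val n c + radix_val n d"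
proof -
  have "(\<lambda>j. rterm n c j + rterm n d j) sums (radix_val n c + radix_val n d)"
    by (intro sums_add radix_sums[OF assms(1,2)] radix_sums[OF assms(1,3)])
  moreover have "(\<lambda>j. rterm n c j + rterm n d j) = rterm n (\<lambda>j. c j + d j)"
    by (auto simp: rterm_def add_divide_distrib)
  ultimately show ?thesis by (simp add: radix_val_rterm sums_iff)
qed

lemma radix_diff:
  assumes "1 < cmod (bb n)" "\<forall>j\<ge>1. \<bar>c j\<bar> \<le> (M::int)" "\<forall>j\<ge>1. \<bar>d j\<bar> \<le> (M'::int)"
  shows "radix_val n (\<lambda>j. c j - d j) = radix_val n c - radix_val n d"
proof -
  have "(\<lambda>j. rterm n c j - rterm n d j) sums (radix_val n c - radix_val n d)"
    by (intro sums_diff radix_sums[OF assms(1,2)] radix_sums[OF assms(1,3)])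
  moreover have "(\<lambda>j. rterm n c j - rterm n d j) = rterm n (\<lambda>j. c j - d j)"
    by (auto simp: rterm_def diff_divide_distrib)
  ultimately show ?thesis by (simp add: radix_val_rterm sums_iff)
qed

lemma radix_shift:
  assumes "1 < cmod (bb n)" "\<forall>j\<ge>1. \<bar>w j\<bar> \<le> (M::int)"
  shows "radix_val n (\<lambda>j. if j > d then w (j - d) else 0) = radix_val n w / bb n ^ d"
proof -
  let ?g = "rterm n (\<lambda>j. if j > d then w (j - d) else 0)"
  have "(\<lambda>j. rterm n w j / bb n ^ d) sums (radix_val n w / bb n ^ d)"
    by (intro sums_divide radix_sums[OF assms])
  moreover have "(\<lambda>j. ?g (j + d)) = (\<lambda>j. rterm n w j / bb n ^ d)"
    by (auto simp: rterm_def power_add field_simps bb_nz)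
  ultimately have "(\<lambda>j. ?g (j + d)) sums (radix_val n w / bb n ^ d)" by simp
  moreover have "sum ?g {..<d} = 0"
    by (auto simp: rterm_def intro!: sum.neutral)
  ultimately have "?g sums (radix_val n w / bb n ^ d)"
    using sums_iff_shift[of ?g d] by simp
  thus ?thesis by (simp add: radix_val_rterm sums_iff)
qed

lemma radix_finite:
  assumes "\<forall>j>N. c j = 0"
  shows "radix_val n c = (\<Sum>j=1..N. of_int (c j) / bb n ^ j)"
proof -
  have "radix_val n c = sum (rterm n c) {..<N}"
    unfolding radix_val_rterm
    by (rule suminf_finite) (use assms in \<open>auto simp: rterm_def\<close>)
  also have "\<dots> = (\<Sum>j=1..N. of_int (c j) / bb n ^ j)"
    unfolding rterm_def
    by (rule sum.reindex_bij_witness[of _ "\<lambda>j. j - 1" Suc]) auto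
  finally show ?thesis .
qed

lemma radix_lower:
  assumes n2: "n \<ge> 2" and bd: "\<forall>j\<ge>1. \<bar>\<delta> j\<bar> \<le> (m::int)" and v1: "1 \<le> v"
    and z: "\<forall>j. 1 \<le> j \<and> j < v \<longrightarrow> \<delta> j = 0" and dv: "\<bar>\<delta> v\<bar> = m"
  shows "of_int m * (cmod (bb n) - 2) / ((cmod (bb n) - 1) * cmod (bb n) ^ v) \<le> cmod (radix_val n \<delta>)"
proof -
  define \<beta> where "\<beta> = cmod (bb n)"
  have b2: "2 < \<beta>" using bb_gt2[OF n2] by (simp add: \<beta>_def)
  hence b1: "1 < cmod (bb n)" by (simp add: \<beta>_def)
  define f where "f = rterm n \<delta>"
  define S where "S = radix_val n \<delta>"
  have fS: "f sums S" unfolding f_def S_def by (rule radix_sums[OF b1 bd])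
  obtain v' where vv: "v = Suc v'" using v1 by (cases v) auto
  have "sum f {..<v'} = 0"
    using z vv by (auto simp: f_def rterm_def intro!: sum.neutral)
  hence sf: "sum f {..<v} = of_int (\<delta> v) / bb n ^ v"
    by (simp add: vv f_def rterm_def del: power_Suc)
  define Tl where "Tl = S - of_int (\<delta> v) / bb n ^ v"
  have tail: "(\<lambda>i. f (i + v)) sums Tl"
    using sums_iff_shift'[of f v S] fS sf by (simp add: Tl_def)
  define q where "q = 1 / \<beta>"
  have q0: "0 < q" "q < 1" using b2 by (auto simp: q_def)
  have bnd: "norm (f (i + v)) \<le> of_int m * q ^ Suc v * q ^ i" for i
    using rterm_bound[OF bd, of n "i + v"] by (simp add: f_def q_def \<beta>_def power_add mult_ac)
  have gs: "(\<lambda>i. of_int m * q ^ Suc v * q ^ i) sums (of_int m * q ^ Suc v * (1 / (1 - q)))"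
    by (intro sums_mult geometric_sums) (use q0 in auto)
  have sn: "summable (\<lambda>i. norm (f (i + v)))"
    by (rule summable_norm_comparison_test[OF _ sums_summable[OF gs]]) (use bnd in blast)
  have "norm Tl = norm (\<Sum>i. f (i + v))" using tail by (simp add: sums_iff)
  also have "\<dots> \<le> (\<Sum>i. norm (f (i + v)))" by (rule summable_norm[OF sn])
  also have "\<dots> \<le> (\<Sum>i. of_int m * q ^ Suc v * q ^ i)"
    by (rule suminf_le[OF bnd sn sums_summable[OF gs]])
  also have "\<dots> = of_int m * q ^ Suc v * (1 / (1 - q))" using gs by (simp add: sums_iff)
  finally have nT: "norm Tl \<le> of_int m * q ^ Suc v * (1 / (1 - q))" .
  have nd: "norm (of_int (\<delta> v) / bb n ^ v) = of_int m * q ^ v"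
  proof -
    have "\<bar>real_of_int (\<delta> v)\<bar> = real_of_int m" using dv by (metis of_int_abs)
    thus ?thesis by (simp add: norm_divide norm_power q_def \<beta>_def power_one_over)
  qed
  have "S = of_int (\<delta> v) / bb n ^ v + Tl" by (simp add: Tl_def)
  hence "norm S \<ge> norm (of_int (\<delta> v) / bb n ^ v) - norm Tl"
    by (metis norm_diff_ineq add_diff_cancel_left')
  hence "norm S \<ge> of_int m * q ^ v - of_int m * q ^ Suc v * (1 / (1 - q))"
    using nd nT by linarith
  moreover have "of_int m * q ^ v - of_int m * q ^ Suc v * (1 / (1 - q))
      = of_int m * (\<beta> - 2) / ((\<beta> - 1) * \<beta> ^ v)"
    using b2 by (simp add: q_def field_simps power_one_over)
  ultimately show ?thesis by (simp add: S_def \<beta>_def)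
qed

lemma radix_unique:
  assumes n2: "n \<ge> 2" and m0: "0 < m" and c: "\<forall>j\<ge>1. c j \<in> {0, m}" and d: "\<forall>j\<ge>1. d j \<in> {0, m}"
    and eq: "radix_val n c = radix_val n d"
  shows "\<forall>j\<ge>1. c j = d j"
proof (rule ccontr)
  assume "\<not> (\<forall>j\<ge>1. c j = d j)"
  then obtain j where j: "j \<ge> 1" "c j \<noteq> d j" by auto
  have b1: "1 < cmod (bb n)" using bb_gt2[OF n2] by simp
  have cb: "\<forall>j\<ge>1. \<bar>c j\<bar> \<le> m" and db: "\<forall>j\<ge>1. \<bar>d j\<bar> \<le> m" using c d m0 by auto
  define \<delta> where "\<delta> = (\<lambda>j. c j - d j)"
  have r0: "radix_val n \<delta> = 0" unfolding \<delta>_def using radix_diff[OF b1 cb db] eq by simp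
  define v where "v = (LEAST j. j \<ge> 1 \<and> \<delta> j \<noteq> 0)"
  have vP: "v \<ge> 1 \<and> \<delta> v \<noteq> 0" unfolding v_def by (rule LeastI[of _ j]) (use j in \<open>auto simp: \<delta>_def\<close>)
  have vz: "\<forall>i. 1 \<le> i \<and> i < v \<longrightarrow> \<delta> i = 0" unfolding v_def using not_less_Least by blast
  have "c v \<in> {0, m}" "d v \<in> {0, m}" using vP c d by auto
  hence dv: "\<bar>\<delta> v\<bar> = m" using vP m0 by (auto simp: \<delta>_def)
  have \<delta>b: "\<forall>j\<ge>1. \<bar>\<delta> j\<bar> \<le> m"
  proof (intro allI impI)
    fix i :: nat assume "i \<ge> 1"
    hence "c i \<in> {0, m}" "d i \<in> {0, m}" using c d by auto
    thus "\<bar>\<delta> i\<bar> \<le> m" using m0 by (auto simp: \<delta>_def)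
  qed
  have "of_int m * (cmod (bb n) - 2) / ((cmod (bb n) - 1) * cmod (bb n) ^ v) \<le> 0"
    using radix_lower[OF n2 \<delta>b _ vz dv] vP r0 by simp
  moreover have "0 < of_int m * (cmod (bb n) - 2) / ((cmod (bb n) - 1) * cmod (bb n) ^ v)"
    using bb_gt2[OF n2] m0 by (intro divide_pos_pos mult_pos_pos zero_less_power) auto
  ultimately show False by linarith
qed

lemma cont_coord: "continuous_on A (\<lambda>c::nat\<Rightarrow>int. (of_int (c k) :: complex))"
proof -
  have "continuous_on UNIV (\<lambda>c::nat\<Rightarrow>int. (of_int (c k) :: complex))"
    by (rule continuous_on_compose2[OF Topological_Spaces.continuous_on_discrete continuous_on_product_coordinates]) auto
  thus ?thesis by (rule continuous_on_subset) auto
qed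

lemma radix_compact:
  assumes b1: "1 < cmod (bb n)" and fin: "\<forall>j. finite (B j)" and bd: "\<forall>j. \<forall>x\<in>B j. \<bar>x\<bar> \<le> (M::int)"
  shows "compact (radix_val n ` {c. \<forall>j. c j \<in> B j})"
proof (rule compact_continuous_image)
  let ?A = "{c. \<forall>j. c j \<in> B j}"
  have A: "?A = Pi\<^sub>E UNIV B" by (auto simp: PiE_def Pi_def)
  have "compactin (product_topology (\<lambda>_. euclidean) UNIV) (Pi\<^sub>E UNIV B)"
    using fin by (subst compactin_PiE) (auto simp: compactin_euclidean_iff finite_imp_compact)
  thus "compact ?A" unfolding A euclidean_product_topology compactin_euclidean_iff .
  have "uniform_limit ?A (\<lambda>N c. \<Sum>i<N. rterm n c i) (\<lambda>c. \<Sum>i. rterm n c i) sequentially"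
  proof (rule Weierstrass_m_test)
    show "norm (rterm n c i) \<le> of_int M * (1 / cmod (bb n)) ^ Suc i" if "c \<in> ?A" for i c
      using that bd by (intro rterm_bound) auto
    have "summable (\<lambda>j. (1 / cmod (bb n)) ^ j)"
      using b1 by (intro summable_geometric) (auto simp: divide_simps)
    hence "summable (\<lambda>j. (1 / cmod (bb n)) ^ Suc j)"
      using summable_ignore_initial_segment[of _ 1] by simp
    thus "summable (\<lambda>j. of_int M * (1 / cmod (bb n)) ^ Suc j)"
      by (rule summable_mult)
  qed
  moreover have "\<forall>\<^sub>F N in sequentially. continuous_on ?A (\<lambda>c. \<Sum>i<N. rterm n c i)"
    by (intro always_eventually allI continuous_intros cont_coord) (simp add: rterm_def, intro continuous_intros cont_coord, simp add: bb_nz)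
  ultimately have "continuous_on ?A (\<lambda>c. \<Sum>i. rterm n c i)"
    by (intro uniform_limit_theorem) auto
  thus "continuous_on ?A (radix_val n)"
    by (simp add: radix_val_rterm[abs_def])
qed


definition gsq :: "int \<Rightarrow> (nat \<Rightarrow> int) \<Rightarrow> nat \<Rightarrow> int" where
  "gsq m as = (\<lambda>j. Min ({0, m} \<inter> (\<lambda>x. x + as j) ` {0, m}))"

definition Eseq :: "int \<Rightarrow> (nat \<Rightarrow> int) \<Rightarrow> (nat \<Rightarrow> int) set" where
  "Eseq m as = {e. \<forall>j. e j \<in> (if j = 0 then {0} else {0, m - \<bar>as j\<bar>})}"

lemma gsq_app: "gsq m as j = Min ({0, m} \<inter> (\<lambda>x. x + as j) ` {0, m})"
  unfolding gsq_def by (rule refl)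

lemma gsq_val:
  assumes "0 < m" "as j \<in> {0, m, -m}"
  shows "gsq m as j = (if as j = m then m else 0)"
proof -
  consider "as j = 0" | "as j = m" | "as j = -m" using assms(2) by auto
  thus ?thesis
  proof cases
    case 1 thus ?thesis using assms(1) by (simp add: gsq_def)
  next
    case 2
    hence eq: "{0, m} \<inter> (\<lambda>x. x + as j) ` {0, m} = {m}" using assms(1) by auto
    show ?thesis unfolding gsq_app eq using 2 by simp
  next
    case 3
    hence eq: "{0, m} \<inter> (\<lambda>x. x + as j) ` {0, m} = {0}" using assms(1) by auto
    show ?thesis unfolding gsq_app eq using 3 assms(1) by simp
  qed
qed

lemma Calpha_char:
  assumes n2: "n \<ge> 2" and m0: "0 < m"
    and as_digits: "\<forall>j\<ge>1. as j \<in> {0, m, - m}"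
    and as_val: "\<alpha> = radix_val n as"
    and as_unique: "\<forall>\<beta>. (\<forall>j\<ge>1. \<beta> j \<in> {0, m, - m}) \<and> radix_val n \<beta> = \<alpha>
                        \<longrightarrow> (\<forall>j\<ge>1. \<beta> j = as j)"
    and \<gamma>_def: "\<gamma> = radix_val n (gsq m as)"
    and C\<alpha>_def: "C\<alpha> = Cset n {0, m} \<inter> (\<lambda>z. z + \<alpha>) ` Cset n {0, m}"
  shows "C\<alpha> = (\<lambda>k. \<gamma> + k) ` (radix_val n ` Eseq m as)"
proof -
  have b1: "1 < cmod (bb n)" using bb_gt2[OF n2] by simp
  have gv: "\<And>j. j \<ge> 1 \<Longrightarrow> gsq m as j = (if as j = m then m else 0)"
  proof -
    fix j :: nat assume "j \<ge> 1"
    hence "as j \<in> {0, m, -m}" using as_digits by blast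
    thus "gsq m as j = (if as j = m then m else 0)" by (rule gsq_val[OF m0])
  qed
  have gb: "\<forall>j\<ge>1. \<bar>gsq m as j\<bar> \<le> m" using gv m0 by auto
  have asb: "\<forall>j\<ge>1. \<bar>as j\<bar> \<le> m" using as_digits m0 by auto
  have eb: "\<forall>j\<ge>1. \<bar>e j\<bar> \<le> m" if "e \<in> Eseq m as" for e
  proof (intro allI impI)
    fix j :: nat assume j: "j \<ge> 1"
    have "e j \<in> (if j = 0 then {0} else {0, m - \<bar>as j\<bar>})" using that by (auto simp: Eseq_def)
    hence "e j \<in> {0, m - \<bar>as j\<bar>}" using j by simp
    thus "\<bar>e j\<bar> \<le> m" using as_digits j m0 by auto
  qed
  show ?thesis
  proof (intro equalityI subsetI)
    fix x assume "x \<in> C\<alpha>"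
    then obtain d d' where d: "\<forall>j\<ge>1. d j \<in> {0, m}" "x = radix_val n d"
      and d': "\<forall>j\<ge>1. d' j \<in> {0, m}" "x = radix_val n d' + \<alpha>"
      unfolding C\<alpha>_def Cset_def by auto
    have db: "\<forall>j\<ge>1. \<bar>d j\<bar> \<le> m" "\<forall>j\<ge>1. \<bar>d' j\<bar> \<le> m"
    proof (safe)
      fix j :: nat assume j: "j \<ge> 1"
      have "d j \<in> {0, m}" "d' j \<in> {0, m}" using d(1)[rule_format, OF j] d'(1)[rule_format, OF j] by auto
      thus "\<bar>d j\<bar> \<le> m" "\<bar>d' j\<bar> \<le> m" using m0 by auto
    qed
    have h1: "radix_val n (\<lambda>j. d j - d' j) = \<alpha>"
      using radix_diff[OF b1 db] d d' by (metis add_diff_cancel_left' add.commute)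
    have h2: "\<forall>j\<ge>1. d j - d' j \<in> {0, m, - m}"
    proof (intro allI impI)
      fix j :: nat assume "j \<ge> 1"
      hence "d j \<in> {0, m}" "d' j \<in> {0, m}" using d(1) d'(1) by auto
      thus "d j - d' j \<in> {0, m, - m}" by auto
    qed
    have dd: "\<forall>j\<ge>1. d j - d' j = as j"
      by (rule as_unique[THEN spec, of "\<lambda>j. d j - d' j", THEN mp, OF conjI[OF h2 h1]])
    define e where "e = (\<lambda>j. if j = 0 then 0 else d j - gsq m as j)"
    have eE: "e \<in> Eseq m as"
    proof -
      have "e j \<in> {0, m - \<bar>as j\<bar>}" if j: "j \<ge> 1" for j
      proof -
        have "d j \<in> {0, m}" "d' j \<in> {0, m}" "d j - d' j = as j" "as j \<in> {0, m, -m}"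
          using d(1)[rule_format, OF j] d'(1)[rule_format, OF j] dd[rule_format, OF j] as_digits[rule_format, OF j] by auto
        thus ?thesis using gv[OF j] j m0 by (auto simp: e_def)
      qed
      thus ?thesis by (auto simp: Eseq_def e_def)
    qed
    have "radix_val n (\<lambda>j. gsq m as j + e j) = \<gamma> + radix_val n e"
      unfolding \<gamma>_def by (rule radix_add[OF b1 gb eb[OF eE]])
    moreover have "radix_val n (\<lambda>j. gsq m as j + e j) = x"
      using d by (auto simp: e_def intro!: radix_cong)
    ultimately show "x \<in> (\<lambda>k. \<gamma> + k) ` (radix_val n ` Eseq m as)" using eE by auto
  next
    fix x assume "x \<in> (\<lambda>k. \<gamma> + k) ` (radix_val n ` Eseq m as)"
    then obtain e where eE: "e \<in> Eseq m as" and x: "x = \<gamma> + radix_val n e" by auto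
    define d where "d = (\<lambda>j. gsq m as j + e j)"
    have xd: "x = radix_val n d"
      unfolding x d_def \<gamma>_def by (rule radix_add[OF b1 gb eb[OF eE], symmetric])
    have dD: "d j \<in> {0, m}" "d j - as j \<in> {0, m}" if j: "j \<ge> 1" for j
    proof -
      have "e j \<in> (if j = 0 then {0} else {0, m - \<bar>as j\<bar>})" using eE by (auto simp: Eseq_def)
      hence "e j \<in> {0, m - \<bar>as j\<bar>}" using j by simp
      moreover have "as j \<in> {0, m, -m}" using as_digits j by auto
      ultimately have "e j \<in> {0, m - \<bar>as j\<bar>}" "as j \<in> {0, m, -m}" by auto
      thus "d j \<in> {0, m}" "d j - as j \<in> {0, m}" using gv[OF j] m0 by (auto simp: d_def)
    qed
    have dbd: "\<forall>j\<ge>1. \<bar>d j\<bar> \<le> m"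
    proof (intro allI impI)
      fix j :: nat assume "j \<ge> 1"
      hence "d j \<in> {0, m}" by (rule dD)
      thus "\<bar>d j\<bar> \<le> m" using m0 by auto
    qed
    have "radix_val n (\<lambda>j. d j - as j) = x - \<alpha>"
      using radix_diff[OF b1 dbd asb] xd as_val by simp
    hence "x = radix_val n (\<lambda>j. d j - as j) + \<alpha>" by simp
    moreover have "radix_val n (\<lambda>j. d j - as j) \<in> Cset n {0, m}"
      unfolding Cset_def using dD by blast
    moreover have "x \<in> Cset n {0, m}" unfolding Cset_def using dD xd by blast
    ultimately show "x \<in> C\<alpha>" unfolding C\<alpha>_def by auto
  qed
qed



lemma Eseq_val:
  assumes "e \<in> Eseq m as" "j \<ge> 1" "as j \<in> {0, m, -m}" "0 < m"
  shows "e j \<in> {0, m}" "e j \<noteq> 0 \<Longrightarrow> as j = 0"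
proof -
  have "e j \<in> (if j = 0 then {0} else {0, m - \<bar>as j\<bar>})" using assms(1) by (auto simp: Eseq_def)
  hence "e j \<in> {0, m - \<bar>as j\<bar>}" using assms(2) by simp
  thus "e j \<in> {0, m}" "e j \<noteq> 0 \<Longrightarrow> as j = 0" using assms(3,4) by auto
qed

lemma part_a_core:
  assumes n2: "n \<ge> 2" and m0: "0 < m"
    and as_digits: "\<forall>j\<ge>1. as j \<in> {0, m, - m}"
    and Cchar: "C\<alpha> = (\<lambda>k. \<gamma> + k) ` (radix_val n ` Eseq m as)"
    and inv: "(\<lambda>x. r * x + (1 - r) * \<gamma>) ` C\<alpha> \<subseteq> C\<alpha>"
    and r0: "r \<noteq> 0" and r1: "cmod r < 1"
  shows "\<exists>p\<ge>1. \<forall>t\<ge>1. as t = 0 \<longrightarrow> as (t + p) = 0"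
proof (cases "\<exists>t\<ge>1. as t = 0")
  case False
  thus ?thesis by (intro exI[of _ 1]) auto
next
  case True
  define \<beta> where "\<beta> = cmod (bb n)"
  have b2: "2 < \<beta>" using bb_gt2[OF n2] by (simp add: \<beta>_def)
  have b1: "1 < cmod (bb n)" using b2 by (simp add: \<beta>_def)
  have P1: "\<gamma> + r * w \<in> C\<alpha>" if "\<gamma> + w \<in> C\<alpha>" for w
  proof -
    have "r * (\<gamma> + w) + (1 - r) * \<gamma> \<in> C\<alpha>" using inv that by blast
    moreover have "r * (\<gamma> + w) + (1 - r) * \<gamma> = \<gamma> + r * w" by (simp add: algebra_simps)
    ultimately show ?thesis by simp
  qed
  have Pk: "\<gamma> + r ^ k * w \<in> C\<alpha>" if "\<gamma> + w \<in> C\<alpha>" for w k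
  proof (induction k)
    case 0 thus ?case using that by simp
  next
    case (Suc k)
    from P1[OF Suc.IH] show ?case by (simp add: mult.assoc)
  qed
  have getw: "\<exists>e\<in>Eseq m as. z = radix_val n e" if "\<gamma> + z \<in> C\<alpha>" for z
    using that unfolding Cchar by auto
  have single: "\<gamma> + of_int m / bb n ^ t \<in> C\<alpha>" if t: "t \<ge> 1" "as t = 0" for t
  proof -
    define e where "e = (\<lambda>j. if j = t then m else 0)"
    have "e \<in> Eseq m as" using t by (auto simp: Eseq_def e_def)
    moreover have "radix_val n e = of_int m / bb n ^ t"
    proof -
      have "radix_val n e = (\<Sum>j=1..t. of_int (e j) / bb n ^ j)"
        by (rule radix_finite) (auto simp: e_def)
      also have "\<dots> = (\<Sum>j\<in>{1..t}. if j = t then of_int m / bb n ^ t else 0)"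
        by (rule sum.cong) (auto simp: e_def)
      also have "\<dots> = of_int m / bb n ^ t" using t by simp
      finally show ?thesis .
    qed
    ultimately have "of_int m / bb n ^ t \<in> radix_val n ` Eseq m as" by (metis imageI)
    thus ?thesis unfolding Cchar by (rule imageI)
  qed
  define t1 where "t1 = (LEAST t. t \<ge> 1 \<and> as t = 0)"
  have t1P: "t1 \<ge> 1 \<and> as t1 = 0" using True unfolding t1_def by (metis (mono_tags, lifting) LeastI)
  have t1min: "t1 \<le> t" if "t \<ge> 1" "as t = 0" for t
    unfolding t1_def using that by (simp add: Least_le)
  have cpos: "0 < (\<beta> - 2) / (\<beta> - 1)" using b2 by simp
  obtain k where k: "cmod r ^ k < (\<beta> - 2) / (\<beta> - 1)"
    using real_arch_pow_inv[OF cpos r1] by blast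
  define s where "s = r ^ k"
  have s0: "s \<noteq> 0" using r0 by (simp add: s_def)
  have sk: "cmod s < (\<beta> - 2) / (\<beta> - 1)" using k by (simp add: s_def norm_power)
  have zt: "\<exists>e\<in>Eseq m as. s * (of_int m / bb n ^ t) = radix_val n e" if "t \<ge> 1" "as t = 0" for t
    using getw Pk[OF single[OF that]] by (simp add: s_def)
  obtain w where wE: "w \<in> Eseq m as" and wz: "s * (of_int m / bb n ^ t1) = radix_val n w"
    using zt t1P by blast
  have wv: "w j \<in> {0, m}" "w j \<noteq> 0 \<Longrightarrow> as j = 0" if "j \<ge> 1" for j
    using Eseq_val[OF wE that _ m0] as_digits that by auto
  have "\<exists>j\<ge>1. w j \<noteq> 0"
  proof (rule ccontr)
    assume "\<not> (\<exists>j\<ge>1. w j \<noteq> 0)"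
    hence "radix_val n w = 0" by (intro radix_zero) auto
    moreover have "s * (of_int m / bb n ^ t1) \<noteq> 0" using s0 m0 bb_nz by simp
    ultimately show False using wz by simp
  qed
  then obtain j0 where j0: "j0 \<ge> 1" "w j0 \<noteq> 0" by auto
  define v where "v = (LEAST j. j \<ge> 1 \<and> w j \<noteq> 0)"
  have vP: "v \<ge> 1 \<and> w v \<noteq> 0" unfolding v_def by (rule LeastI[of _ j0]) (use j0 in auto)
  have vz: "\<forall>i. 1 \<le> i \<and> i < v \<longrightarrow> w i = 0" unfolding v_def using not_less_Least by blast
  have wvm: "w v = m" using wv[of v] vP by auto
  have wb: "\<forall>j\<ge>1. \<bar>w j\<bar> \<le> m"
  proof (intro allI impI)
    fix j :: nat assume "j \<ge> 1"
    hence "w j \<in> {0, m}" by (rule wv)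
    thus "\<bar>w j\<bar> \<le> m" using m0 by auto
  qed
  have vt: "v > t1"
  proof (rule ccontr)
    assume "\<not> v > t1"
    hence vle: "v \<le> t1" by simp
    have "of_int m * (\<beta> - 2) / ((\<beta> - 1) * \<beta> ^ v) \<le> cmod (radix_val n w)"
      using radix_lower[OF n2 wb _ vz] vP wvm m0 by (simp add: \<beta>_def)
    also have "cmod (radix_val n w) = cmod s * of_int m / \<beta> ^ t1"
      using wz[symmetric] m0 by (simp add: norm_mult norm_divide norm_power \<beta>_def)
    also have "\<dots> < (\<beta> - 2) / (\<beta> - 1) * of_int m / \<beta> ^ t1"
      using sk m0 b2 by (intro divide_strict_right_mono mult_strict_right_mono) auto
    also have "\<dots> \<le> (\<beta> - 2) / (\<beta> - 1) * of_int m / \<beta> ^ v"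
      using vle b2 m0 by (intro divide_left_mono power_increasing mult_nonneg_nonneg mult_pos_pos zero_less_power) auto
    finally show False using b2 by (simp add: field_simps)
  qed
  show ?thesis
  proof (intro exI[of _ "v - t1"] conjI allI impI)
    show "1 \<le> v - t1" using vt by simp
    fix t :: nat assume t: "t \<ge> 1" "as t = 0"
    have tt: "t1 \<le> t" by (rule t1min[OF t])
    define d where "d = t - t1"
    obtain wt where wtE: "wt \<in> Eseq m as" and wtz: "s * (of_int m / bb n ^ t) = radix_val n wt"
      using zt[OF t] by blast
    have "radix_val n (\<lambda>j. if j > d then w (j - d) else 0) = radix_val n w / bb n ^ d"
      by (rule radix_shift[OF b1 wb])
    also have "\<dots> = s * (of_int m / bb n ^ t)"
      using tt by (simp add: wz[symmetric] d_def power_add[symmetric] bb_nz field_simps)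
    finally have eq: "radix_val n (\<lambda>j. if j > d then w (j - d) else 0) = radix_val n wt"
      using wtz by simp
    have "\<forall>j\<ge>1. (if j > d then w (j - d) else 0) = wt j"
    proof (rule radix_unique[OF n2 m0 _ _ eq])
      show "\<forall>j\<ge>1. (if j > d then w (j - d) else 0) \<in> {0, m}"
        using wv by auto
      show "\<forall>j\<ge>1. wt j \<in> {0, m}"
        using Eseq_val[OF wtE _ _ m0] as_digits by auto
    qed
    hence "wt (v + d) = m" using vP wvm by (auto dest: spec[of _ "v + d"])
    moreover have vd1: "v + d \<ge> 1" using vP by simp
    moreover have "as (v + d) \<in> {0, m, -m}" using as_digits vd1 by blast
    ultimately have "as (v + d) = 0" using Eseq_val(2)[OF wtE vd1 _ m0] m0 by simp
    moreover have "v + d = t + (v - t1)" using vt tt by (simp add: d_def)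
    ultimately show "as (t + (v - t1)) = 0" by simp
  qed
qed



lemma sep_from_shift:
  assumes m0: "0 < m" and as_digits: "\<forall>j\<ge>1. as j \<in> {0, m, - m}"
    and p1: "p \<ge> 1" and sh: "\<forall>t\<ge>1. as t = 0 \<longrightarrow> as (t + p) = 0"
  shows "SEP (\<lambda>j. m - \<bar>as j\<bar>)"
proof -
  have A: "m - \<bar>as j\<bar> = (if as j = 0 then m else 0)" if "j \<ge> 1" for j
  proof -
    have "as j \<in> {0, m, -m}" using as_digits that by blast
    thus ?thesis using m0 by auto
  qed
  have mono: "as (j + q * p) = 0" if "j \<ge> 1" "as j = 0" for j q
  proof (induction q)
    case 0 thus ?case using that by simp
  next
    case (Suc q)
    have "as (j + q * p + p) = 0" using sh Suc.IH that(1) by simp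
    moreover have "j + q * p + p = j + Suc q * p" by simp
    ultimately show ?case by metis
  qed
  define Kl where "Kl = (\<lambda>l. if \<exists>q. as (l + q * p) = 0 then (LEAST q. as (l + q * p) = 0) else 0)"
  define N where "N = Suc (\<Sum>l\<in>{1..p}. Kl l)"
  have N1: "N \<ge> 1" by (simp add: N_def)
  have ev: "as (l + q * p) = 0 \<longleftrightarrow> (\<exists>q'. as (l + q' * p) = 0)" if l: "l \<in> {1..p}" and q: "q \<ge> N" for l q
  proof
    assume "\<exists>q'. as (l + q' * p) = 0"
    then obtain q0 where "as (l + q0 * p) = 0" by blast
    hence "as (l + (LEAST q. as (l + q * p) = 0) * p) = 0" by (rule LeastI)
    hence K: "as (l + Kl l * p) = 0" unfolding Kl_def using \<open>\<exists>q'. as (l + q' * p) = 0\<close> by simp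
    have "Kl l \<le> (\<Sum>l\<in>{1..p}. Kl l)" using l by (intro member_le_sum) auto
    hence "Kl l \<le> q" using q by (simp add: N_def)
    then obtain r where r: "q = Kl l + r" using le_Suc_ex by blast
    have "as (l + Kl l * p + r * p) = 0" using mono[OF _ K] l by simp
    thus "as (l + q * p) = 0" using r by (simp add: algebra_simps)
  qed auto
  define P where "P = N * p"
  have P1: "P \<ge> 1" using N1 p1 by (simp add: P_def)
  have dec: "\<exists>l\<in>{1..p}. \<exists>i. l' = l + i * p \<and> i < N" if "l' \<in> {1..P}" for l'
  proof -
    define l where "l = (l' - 1) mod p + 1"
    define i where "i = (l' - 1) div p"
    have "l' - 1 = i * p + (l' - 1) mod p" by (simp add: i_def)
    hence e: "l' = l + i * p" using that unfolding l_def by simp arith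
    have "(l' - 1) mod p < p" using p1 by simp
    hence "l \<in> {1..p}" by (simp add: l_def)
    moreover have "i < N"
    proof -
      have "l' - 1 < N * p" using that by (auto simp: P_def)
      thus ?thesis by (simp add: i_def less_mult_imp_div_less)
    qed
    ultimately show ?thesis using e by blast
  qed
  define bs where "bs = (\<lambda>l. m - \<bar>as l\<bar>)"
  define cs where "cs = (\<lambda>l. (m - \<bar>as (P + l)\<bar>) - (m - \<bar>as l\<bar>))"
  have f1: "\<forall>l'\<in>{1..P}. 0 \<le> cs l'"
  proof
    fix l' assume l': "l' \<in> {1..P}"
    have "as l' = 0 \<Longrightarrow> as (P + l') = 0" using mono[of l' N] l' by (simp add: P_def add.commute)
    moreover have a1: "m - \<bar>as l'\<bar> = (if as l' = 0 then m else 0)" by (rule A) (use l' in auto)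
    moreover have a2: "m - \<bar>as (P + l')\<bar> = (if as (P + l') = 0 then m else 0)" by (rule A) (use l' in auto)
    ultimately show "0 \<le> cs l'" unfolding cs_def using m0 by (cases "as l' = 0") auto
  qed
  have f2: "\<forall>l'\<in>{1..P}. m - \<bar>as l'\<bar> = bs l'" by (simp add: bs_def)
  have f3: "\<forall>k::nat\<ge>1. \<forall>l'\<in>{1..P}. m - \<bar>as (k * P + l')\<bar> = bs l' + cs l'"
  proof (intro allI impI ballI)
    fix k :: nat and l' assume k: "k \<ge> 1" and l': "l' \<in> {1..P}"
    obtain l i where l: "l \<in> {1..p}" and li: "l' = l + i * p" "i < N" using dec[OF l'] by blast
    have e1: "k * P + l' = l + (k * N + i) * p" using li by (simp add: P_def algebra_simps)
    have e2: "P + l' = l + (N + i) * p" using li by (simp add: P_def algebra_simps)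
    have kN: "k * N + i \<ge> N" using k by (metis le_add1 le_trans mult_le_mono1 mult_1)
    have "as (k * P + l') = 0 \<longleftrightarrow> as (P + l') = 0"
      unfolding e1 e2 using ev[OF l kN] ev[OF l, of "N + i"] by simp
    moreover have "k * P + l' \<ge> 1" "P + l' \<ge> 1" using P1 l' by auto
    ultimately show "m - \<bar>as (k * P + l')\<bar> = bs l' + cs l'"
      using A[of "k * P + l'"] A[of "P + l'"] by (simp add: bs_def cs_def)
  qed
  show ?thesis unfolding SEP_def
    by (intro exI[of _ P] conjI exI[of _ bs] exI[of _ cs] P1 f1 f2 f3)
qed



definition Y0 :: "(nat \<Rightarrow> int) \<Rightarrow> nat \<Rightarrow> nat \<Rightarrow> int" where
  "Y0 y p = (\<lambda>j. if 1 \<le> j \<and> j \<le> p then y j else 0)"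

definition newseq :: "nat \<Rightarrow> (nat \<Rightarrow> int) \<Rightarrow> (nat \<Rightarrow> int) \<Rightarrow> (nat \<Rightarrow> int) \<Rightarrow> nat \<Rightarrow> int" where
  "newseq p y z e = (\<lambda>j. Y0 y p j + (if j > p then e (j - p) + Y0 z p (j - p) else 0))"

lemma decomp:
  fixes p j :: nat
  assumes "p \<ge> 1" "j > p"
  shows "\<exists>k\<ge>1. \<exists>l\<in>{1..p}. j = k * p + l"
proof -
  define l where "l = (j - 1) mod p + 1"
  define k where "k = (j - 1) div p"
  have "j - 1 = k * p + (j - 1) mod p" by (simp add: k_def)
  hence e: "j = k * p + l" using assms unfolding l_def by simp
  have "(j - 1) mod p < p" using assms by simp
  hence "l \<in> {1..p}" by (simp add: l_def)
  moreover have "k \<ge> 1"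
  proof -
    have "p div p \<le> (j - 1) div p" using assms by (intro div_le_mono) simp
    thus ?thesis using assms by (simp add: k_def)
  qed
  ultimately show ?thesis using e by blast
qed

lemma A_per:
  fixes p j :: nat
  assumes p1: "p \<ge> 1" and hu: "\<forall>k\<ge>1. \<forall>l\<in>{1..p}. A (k * p + l) = c l"
    and j: "j > p"
  shows "A (j + p) = A j"
proof -
  obtain k l where k: "k \<ge> 1" and l: "l \<in> {1..p}" and e: "j = k * p + l" using decomp[OF p1 j] by blast
  have "j + p = Suc k * p + l" using e by simp
  thus ?thesis using hu k l e by (metis le_Suc_eq)
qed

lemma Y0_bound: "0 \<le> M \<Longrightarrow> \<forall>l\<in>{1..p}. \<bar>y l\<bar> \<le> M \<Longrightarrow> \<forall>j\<ge>1. \<bar>Y0 y p j\<bar> \<le> (M::int)"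
  by (auto simp: Y0_def)

lemma radix_Y0:
  "radix_val n (Y0 y p) = (\<Sum>l=1..p. of_int (y l) / bb n ^ l)"
proof -
  have "radix_val n (Y0 y p) = (\<Sum>j=1..p. of_int (Y0 y p j) / bb n ^ j)"
    by (rule radix_finite) (auto simp: Y0_def)
  also have "\<dots> = (\<Sum>l=1..p. of_int (y l) / bb n ^ l)"
    by (rule sum.cong) (auto simp: Y0_def)
  finally show ?thesis .
qed

lemma newseq_val:
  assumes b1: "1 < cmod (bb n)" and M0: "0 \<le> M"
    and eb: "\<forall>j\<ge>1. \<bar>e j\<bar> \<le> (M::int)" and yb: "\<forall>l\<in>{1..p}. \<bar>y l\<bar> \<le> M" and zb: "\<forall>l\<in>{1..p}. \<bar>z l\<bar> \<le> M"
  shows "(radix_val n e + (\<Sum>l=1..p. of_int (y l) * bb n ^ (p - l) + of_int (z l) / bb n ^ l)) / bb n ^ p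
         = radix_val n (newseq p y z e)"
proof -
  have Yb: "\<forall>j\<ge>1. \<bar>Y0 y p j\<bar> \<le> M" by (rule Y0_bound[OF M0 yb])
  have Zb: "\<forall>j\<ge>1. \<bar>Y0 z p j\<bar> \<le> M" by (rule Y0_bound[OF M0 zb])
  have EZb: "\<forall>j\<ge>1. \<bar>e j + Y0 z p j\<bar> \<le> M + M"
  proof (intro allI impI)
    fix j :: nat assume "j \<ge> 1"
    hence "\<bar>e j\<bar> \<le> M" "\<bar>Y0 z p j\<bar> \<le> M" using eb Zb by auto
    thus "\<bar>e j + Y0 z p j\<bar> \<le> M + M" by linarith
  qed
  have Shb: "\<forall>j\<ge>1. \<bar>(if j > p then e (j - p) + Y0 z p (j - p) else 0)\<bar> \<le> M + M"
    using EZb M0 by auto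
  have "radix_val n (newseq p y z e) = radix_val n (Y0 y p) +
      radix_val n (\<lambda>j. if j > p then e (j - p) + Y0 z p (j - p) else 0)"
    unfolding newseq_def by (rule radix_add[OF b1 Yb Shb])
  also have "radix_val n (\<lambda>j. if j > p then e (j - p) + Y0 z p (j - p) else 0)
      = radix_val n (\<lambda>i. e i + Y0 z p i) / bb n ^ p"
    by (rule radix_shift[OF b1 EZb])
  also have "radix_val n (\<lambda>i. e i + Y0 z p i) = radix_val n e + radix_val n (Y0 z p)"
    by (rule radix_add[OF b1 eb Zb])
  finally have R: "radix_val n (newseq p y z e) = (\<Sum>l=1..p. of_int (y l) / bb n ^ l)
      + (radix_val n e + (\<Sum>l=1..p. of_int (z l) / bb n ^ l)) / bb n ^ p"
    by (simp add: radix_Y0)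
  have "(\<Sum>l=1..p. of_int (y l) * bb n ^ (p - l) + of_int (z l) / bb n ^ l) / bb n ^ p
      = (\<Sum>l=1..p. of_int (y l) / bb n ^ l) + (\<Sum>l=1..p. of_int (z l) / bb n ^ l) / bb n ^ p"
  proof -
    have "(\<Sum>l=1..p. of_int (y l) * bb n ^ (p - l) + of_int (z l) / bb n ^ l) / bb n ^ p
        = (\<Sum>l=1..p. (of_int (y l) * bb n ^ (p - l) + of_int (z l) / bb n ^ l) / bb n ^ p)"
      by (simp add: sum_divide_distrib)
    also have "\<dots> = (\<Sum>l=1..p. of_int (y l) / bb n ^ l + (of_int (z l) / bb n ^ l) / bb n ^ p)"
    proof (rule sum.cong)
      fix l assume "l \<in> {1..p}"
      hence "bb n ^ p = bb n ^ (p - l) * bb n ^ l" by (simp add: power_add[symmetric])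
      thus "(of_int (y l) * bb n ^ (p - l) + of_int (z l) / bb n ^ l) / bb n ^ p
          = of_int (y l) / bb n ^ l + (of_int (z l) / bb n ^ l) / bb n ^ p"
        by (simp add: bb_nz field_simps)
    qed simp
    also have "\<dots> = (\<Sum>l=1..p. of_int (y l) / bb n ^ l) + (\<Sum>l=1..p. of_int (z l) / bb n ^ l) / bb n ^ p"
      by (simp add: sum.distrib sum_divide_distrib)
    finally show ?thesis .
  qed
  thus ?thesis unfolding R by (simp add: add_divide_distrib)
qed



lemma part_b:
  assumes n2: "n \<ge> 2" and m0: "0 < m"
    and as_digits: "\<forall>j\<ge>1. as j \<in> {0, m, - m}"
    and Cchar: "C\<alpha> = (\<lambda>k. \<gamma> + k) ` (radix_val n ` Eseq m as)"
    and p1: "p \<ge> 1" and u0: "\<forall>l\<in>{1..p}. u l \<ge> 0"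
    and ha: "\<forall>l\<in>{1..p}. m - \<bar>as l\<bar> = a l"
    and hu: "\<forall>k\<ge>1. \<forall>l\<in>{1..p}. m - \<bar>as (k * p + l)\<bar> = a l + u l"
  shows "ifs_attractor
                {(\<lambda>x. (x + (\<Sum>l=1..p. of_int (y l) * bb n ^ (p - l) + of_int (z l) / bb n ^ l)
                          - \<gamma>) / bb n ^ p + \<gamma>)
                 | y z :: nat \<Rightarrow> int. \<forall>l\<in>{1..p}. y l \<in> {0, m} \<and> z l \<in> {0, m} \<and>
                                             y l \<le> a l \<and> z l \<le> u l}
                C\<alpha>" (is "ifs_attractor ?F C\<alpha>")
proof -
  define A where "A = (\<lambda>j. m - \<bar>as j\<bar>)"
  define S where "S = (\<lambda>y z. (\<Sum>l=1..p. of_int (y l) * bb n ^ (p - l) + of_int (z l) / bb n ^ l) :: complex)"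
  define h where "h = (\<lambda>y z x. (x + S y z - \<gamma>) / bb n ^ p + \<gamma>)"
  define cond where "cond = (\<lambda>y z. \<forall>l\<in>{1..p}. y l \<in> {0, m} \<and> z l \<in> {0, m} \<and> y l \<le> a l \<and> z l \<le> u l)"
  have F: "?F = {h y z | y z. cond y z}" by (simp add: h_def S_def cond_def)
  have b2: "2 < cmod (bb n)" by (rule bb_gt2[OF n2])
  have b1: "1 < cmod (bb n)" using b2 by simp
  have Aj: "A j \<in> {0, m}" if "j \<ge> 1" for j
  proof -
    have "as j \<in> {0, m, -m}" using as_digits that by blast
    thus ?thesis using m0 by (auto simp: A_def)
  qed
  have Aa: "A l = a l" if "l \<in> {1..p}" for l using ha that by (simp add: A_def)
  have Au: "A (k * p + l) = a l + u l" if "k \<ge> 1" "l \<in> {1..p}" for k l using hu that by (simp add: A_def)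
  have Aper: "A (j + p) = A j" if "j > p" for j
    by (rule A_per[OF p1 _ that, of A "\<lambda>l. a l + u l"]) (use Au in auto)
  have Ap: "A (p + l) = A l + u l" if "l \<in> {1..p}" for l
    using Au[of 1 l] Aa[OF that] that by (simp add: add.commute)
  have Eseq_iff: "e \<in> Eseq m as \<longleftrightarrow> e 0 = 0 \<and> (\<forall>j\<ge>1. e j \<in> {0, A j})" for e
    unfolding Eseq_def A_def
    by (auto; metis One_nat_def Suc_le_eq gr0I not_one_le_zero)
  have Eb: "\<forall>j\<ge>1. \<bar>e j\<bar> \<le> m" if "e \<in> Eseq m as" for e
  proof (intro allI impI)
    fix j :: nat assume j: "j \<ge> 1"
    hence "e j \<in> {0, A j}" using that Eseq_iff by blast
    thus "\<bar>e j\<bar> \<le> m" using Aj[OF j] m0 by auto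
  qed
  have hval: "h y z (\<gamma> + radix_val n e) = \<gamma> + radix_val n (newseq p y z e)"
    if "e \<in> Eseq m as" "cond y z" for y z e
  proof -
    have yb: "\<forall>l\<in>{1..p}. \<bar>y l\<bar> \<le> m" and zb: "\<forall>l\<in>{1..p}. \<bar>z l\<bar> \<le> m"
      using that(2) m0 by (auto simp: cond_def)
    have "h y z (\<gamma> + radix_val n e) = (radix_val n e + S y z) / bb n ^ p + \<gamma>"
      by (simp add: h_def algebra_simps)
    also have "(radix_val n e + S y z) / bb n ^ p = radix_val n (newseq p y z e)"
      unfolding S_def by (rule newseq_val[OF b1 _ Eb[OF that(1)] yb zb]) (use m0 in simp)
    finally show ?thesis by simp
  qed
  have newE: "newseq p y z e \<in> Eseq m as" if eE: "e \<in> Eseq m as" and c: "cond y z" for y z e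
    unfolding Eseq_iff
  proof (intro conjI allI impI)
    show "newseq p y z e 0 = 0" by (simp add: newseq_def Y0_def)
    fix j :: nat assume j: "j \<ge> 1"
    consider "j \<le> p" | "p < j" "j \<le> 2 * p" | "2 * p < j" by linarith
    thus "newseq p y z e j \<in> {0, A j}"
    proof cases
      case 1
      hence l: "j \<in> {1..p}" using j by simp
      have "y j \<in> {0, m}" "y j \<le> A j" using c l Aa[OF l] by (auto simp: cond_def)
      hence "y j \<in> {0, A j}" using Aj[OF j] m0 by auto
      thus ?thesis using 1 j by (simp add: newseq_def Y0_def)
    next
      case 2
      define l where "l = j - p"
      have l: "l \<in> {1..p}" using 2 unfolding l_def by auto
      have jl: "j = p + l" using 2 by (simp add: l_def)
      have el: "e l \<in> {0, A l}" using eE l Eseq_iff by auto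
      have zl: "z l \<in> {0, m}" "z l \<le> u l" using c l by (auto simp: cond_def)
      have Ajl: "A j = A l + u l" using Ap[OF l] jl by simp
      have "A j \<in> {0, m}" "A l \<in> {0, m}" using Aj[OF j] Aj l by auto
      hence "e l + z l \<in> {0, A j}" using el zl Ajl u0 l m0 by auto
      thus ?thesis using 2 jl by (simp add: newseq_def Y0_def)
    next
      case 3
      have jp: "j - p > p" using 3 by simp
      have "e (j - p) \<in> {0, A (j - p)}" using eE jp Eseq_iff by auto
      moreover have "A (j - p) = A j" using Aper[OF jp] 3 by simp
      moreover have "\<not> (j - p \<le> p)" using 3 by simp
      ultimately show ?thesis using 3 by (simp add: newseq_def Y0_def)
    qed
  qed
  show ?thesis
    unfolding ifs_attractor_def F
  proof (intro conjI)
    define R where "R = (\<lambda>g. \<lambda>l. if l \<in> {1..p} then g l else (0::int))"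
    define Ys where "Ys = R ` (Pi\<^sub>E {1..p} (\<lambda>_. {0, m}))"
    have fY: "finite Ys" unfolding Ys_def by (intro finite_imageI finite_PiE) auto
    have "{h y z | y z. cond y z} \<subseteq> (\<lambda>(y, z). h y z) ` (Ys \<times> Ys)"
    proof
      fix f assume "f \<in> {h y z | y z. cond y z}"
      then obtain y z where f: "f = h y z" and c: "cond y z" by blast
      have yY: "R y \<in> Ys" unfolding Ys_def
        by (rule image_eqI[of _ _ "restrict y {1..p}"]) (use c in \<open>auto simp: R_def cond_def\<close>)
      have zY: "R z \<in> Ys" unfolding Ys_def
        by (rule image_eqI[of _ _ "restrict z {1..p}"]) (use c in \<open>auto simp: R_def cond_def\<close>)
      have "S (R y) (R z) = S y z" unfolding S_def by (rule sum.cong) (auto simp: R_def)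
      hence "f = h (R y) (R z)" by (simp add: f h_def)
      thus "f \<in> (\<lambda>(y, z). h y z) ` (Ys \<times> Ys)" using yY zY by auto
    qed
    thus "finite {h y z | y z. cond y z}" by (rule finite_subset) (use fY in auto)
  next
    have "cond (\<lambda>_. 0) (\<lambda>_. 0)" using Aa Aj u0 m0 by (auto simp: cond_def) (metis Aj atLeastAtMost_iff dual_order.eq_iff insert_iff singletonD less_imp_le)
    thus "{h y z | y z. cond y z} \<noteq> {}" by blast
  next
    show "\<forall>f\<in>{h y z | y z. cond y z}. contracting_similarity f"
    proof
      fix f assume "f \<in> {h y z | y z. cond y z}"
      then obtain y z where f: "f = h y z" by blast
      show "contracting_similarity f"
        unfolding contracting_similarity_def
      proof (intro exI[of _ "1 / cmod (bb n) ^ p"] conjI allI)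
        show "0 < 1 / cmod (bb n) ^ p" using b1 by (intro divide_pos_pos zero_less_power) auto
        have "1 < cmod (bb n) ^ p" using b1 p1 by (intro one_less_power) auto
        thus "1 / cmod (bb n) ^ p < 1" by simp
        fix x x'
        have "f x - f x' = (x - x') / bb n ^ p" by (simp add: f h_def diff_divide_distrib add_divide_distrib)
        thus "dist (f x) (f x') = 1 / cmod (bb n) ^ p * dist x x'"
          by (simp add: dist_norm norm_divide norm_power)
      qed
    qed
  next
    have "(\<lambda>_. 0) \<in> Eseq m as" by (simp add: Eseq_def)
    thus "C\<alpha> \<noteq> {}" unfolding Cchar by blast
  next
    define B where "B = (\<lambda>j::nat. if j = 0 then {0} else {0, m - \<bar>as j\<bar>})"
    have "Eseq m as = {c. \<forall>j. c j \<in> B j}" by (simp add: Eseq_def B_def)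
    moreover have "compact (radix_val n ` {c. \<forall>j. c j \<in> B j})"
    proof (rule radix_compact[OF b1, of B m])
      show "\<forall>j. finite (B j)" by (simp add: B_def)
      show "\<forall>j. \<forall>x\<in>B j. \<bar>x\<bar> \<le> m"
      proof (intro allI ballI)
        fix j x assume x: "x \<in> B j"
        show "\<bar>x\<bar> \<le> m"
        proof (cases "j = 0")
          case True thus ?thesis using x m0 by (simp add: B_def)
        next
          case False
          hence "A j \<in> {0, m}" using Aj by simp
          thus ?thesis using x False m0 by (auto simp: B_def A_def)
        qed
      qed
    qed
    ultimately have "compact (radix_val n ` Eseq m as)" by simp
    moreover have "continuous_on (radix_val n ` Eseq m as) (\<lambda>k. \<gamma> + k)" by (intro continuous_intros)
    ultimately show "compact C\<alpha>" unfolding Cchar by (metis compact_continuous_image)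
  next
    show "C\<alpha> = (\<Union>f\<in>{h y z | y z. cond y z}. f ` C\<alpha>)"
    proof (intro equalityI subsetI)
      fix x assume "x \<in> (\<Union>f\<in>{h y z | y z. cond y z}. f ` C\<alpha>)"
      then obtain y z x0 where c: "cond y z" and x0: "x0 \<in> C\<alpha>" and x: "x = h y z x0" by blast
      obtain e where eE: "e \<in> Eseq m as" and x0e: "x0 = \<gamma> + radix_val n e" using x0 Cchar by blast
      have "x = \<gamma> + radix_val n (newseq p y z e)" using hval[OF eE c] x x0e by simp
      thus "x \<in> C\<alpha>" unfolding Cchar using newE[OF eE c] by blast
    next
      fix x assume "x \<in> C\<alpha>"
      then obtain e where eE: "e \<in> Eseq m as" and xe: "x = \<gamma> + radix_val n e" using Cchar by blast
      define y where "y = e"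
      define z where "z = (\<lambda>l. if A l = 0 then e (p + l) else 0)"
      define e2 where "e2 = (\<lambda>j. if j = 0 then 0 else if j \<le> p then (if A j = 0 then 0 else e (p + j)) else e (j + p))"
      have c: "cond y z"
        unfolding cond_def
      proof
        fix l assume l: "l \<in> {1..p}"
        have l1: "l \<ge> 1" using l by simp
        have el: "e l \<in> {0, A l}" using eE l1 Eseq_iff by auto
        have epl: "e (p + l) \<in> {0, A (p + l)}" using eE l1 Eseq_iff by auto
        have "A l \<in> {0, m}" using Aj[OF l1] .
        moreover have "A (p + l) \<in> {0, m}" using Aj l1 by simp
        ultimately show "y l \<in> {0, m} \<and> z l \<in> {0, m} \<and> y l \<le> a l \<and> z l \<le> u l"
          using el epl Ap[OF l] Aa[OF l] u0 l m0 by (auto simp: y_def z_def)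
      qed
      have e2E: "e2 \<in> Eseq m as"
        unfolding Eseq_iff
      proof (intro conjI allI impI)
        show "e2 0 = 0" by (simp add: e2_def)
        fix j :: nat assume j: "j \<ge> 1"
        show "e2 j \<in> {0, A j}"
        proof (cases "j \<le> p")
          case True
          hence l: "j \<in> {1..p}" using j by simp
          have epl: "e (p + j) \<in> {0, A (p + j)}" using eE j Eseq_iff by auto
          have "A j \<in> {0, m}" "A (p + j) \<in> {0, m}" using Aj j by auto
          thus ?thesis using epl Ap[OF l] u0 l m0 True j by (auto simp: e2_def)
        next
          case False
          hence "e (j + p) \<in> {0, A (j + p)}" using eE Eseq_iff by auto
          thus ?thesis using Aper[of j] False j by (simp add: e2_def)
        qed
      qed
      have "\<forall>j\<ge>1. newseq p y z e2 j = e j"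
      proof (intro allI impI)
        fix j :: nat assume j: "j \<ge> 1"
        consider "j \<le> p" | "p < j" "j \<le> 2 * p" | "2 * p < j" by linarith
        thus "newseq p y z e2 j = e j"
        proof cases
          case 1 thus ?thesis using j by (simp add: newseq_def Y0_def y_def)
        next
          case 2
          define l where "l = j - p"
          have l: "l \<ge> 1" "l \<le> p" and jl: "j = p + l" using 2 by (auto simp: l_def)
          show ?thesis using l jl by (simp add: newseq_def Y0_def z_def e2_def)
        next
          case 3
          hence "\<not> (j - p \<le> p)" "j - p \<noteq> 0" by auto
          thus ?thesis using 3 by (simp add: newseq_def Y0_def e2_def)
        qed
      qed
      hence "radix_val n (newseq p y z e2) = radix_val n e" by (rule radix_cong)
      hence "x = h y z (\<gamma> + radix_val n e2)" using hval[OF e2E c] xe by simp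
      moreover have "\<gamma> + radix_val n e2 \<in> C\<alpha>" unfolding Cchar using e2E by blast
      ultimately show "x \<in> (\<Union>f\<in>{h y z | y z. cond y z}. f ` C\<alpha>)" using c by blast
    qed
  qed
qed


theorem theorem5p7:
  fixes n :: nat and m :: int and \<alpha> :: complex and as :: "nat \<Rightarrow> int"
    and \<gamma> :: complex and C\<alpha> :: "complex set"
  assumes n2: "n \<ge> 2"
    and m_lo: "2 \<le> m" and m_hi: "m \<le> int n ^ 2"
    and \<alpha>E: "\<alpha> \<in> Eset n {0, m}"
    and as_digits: "\<forall>j\<ge>1. as j \<in> {0, m, - m}"
    and as_val: "\<alpha> = radix_val n as"
    and as_unique: "\<forall>\<beta>. (\<forall>j\<ge>1. \<beta> j \<in> {0, m, - m}) \<and> radix_val n \<beta> = \<alpha>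
                        \<longrightarrow> (\<forall>j\<ge>1. \<beta> j = as j)"
    and \<gamma>_def: "\<gamma> = radix_val n (\<lambda>j. Min ({0, m} \<inter> (\<lambda>x. x + as j) ` {0, m}))"
    and C\<alpha>_def: "C\<alpha> = Cset n {0, m} \<inter> (\<lambda>z. z + \<alpha>) ` Cset n {0, m}"
  shows "((\<exists>F. self_similar C\<alpha> \<and> ifs_attractor F C\<alpha> \<and>
             (\<exists>r. (\<lambda>x. r * x + (1 - r) * \<gamma>) \<in> F))
           \<longrightarrow> SEP (\<lambda>j. m - \<bar>as j\<bar>))
       \<and> (\<forall>(p::nat) (a::nat \<Rightarrow> int) (u::nat \<Rightarrow> int).
            p \<ge> 1 \<and> (\<forall>l\<in>{1..p}. u l \<ge> 0) \<and>
            (\<forall>l\<in>{1..p}. m - \<bar>as l\<bar> = a l) \<and>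
            (\<forall>k\<ge>1. \<forall>l\<in>{1..p}. m - \<bar>as (k * p + l)\<bar> = a l + u l)
          \<longrightarrow> self_similar C\<alpha> \<and>
              ifs_attractor
                {(\<lambda>x. (x + (\<Sum>l=1..p. of_int (y l) * bb n ^ (p - l) + of_int (z l) / bb n ^ l)
                          - \<gamma>) / bb n ^ p + \<gamma>)
                 | y z :: nat \<Rightarrow> int. \<forall>l\<in>{1..p}. y l \<in> {0, m} \<and> z l \<in> {0, m} \<and>
                                             y l \<le> a l \<and> z l \<le> u l}
                C\<alpha>)"
proof -
  have m0: "0 < m" using m_lo by simp
  have \<gamma>g: "\<gamma> = radix_val n (gsq m as)" unfolding gsq_def by (rule \<gamma>_def)
  have Cchar: "C\<alpha> = (\<lambda>k. \<gamma> + k) ` (radix_val n ` Eseq m as)"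
    by (rule Calpha_char[OF n2 m0 as_digits as_val as_unique \<gamma>g C\<alpha>_def])
  show ?thesis
  proof (intro conjI impI allI)
    assume "\<exists>F. self_similar C\<alpha> \<and> ifs_attractor F C\<alpha> \<and> (\<exists>r. (\<lambda>x. r * x + (1 - r) * \<gamma>) \<in> F)"
    then obtain F r where FA: "ifs_attractor F C\<alpha>" and fF: "(\<lambda>x. r * x + (1 - r) * \<gamma>) \<in> F" by blast
    let ?f = "\<lambda>x. r * x + (1 - r) * \<gamma>"
    have eqU: "C\<alpha> = (\<Union>f\<in>F. f ` C\<alpha>)" and cs: "contracting_similarity ?f"
      using FA fF unfolding ifs_attractor_def by auto
    have inv: "?f ` C\<alpha> \<subseteq> C\<alpha>" using fF eqU by blast
    obtain \<rho> where \<rho>: "0 < \<rho>" "\<rho> < 1" and d: "\<forall>x y. dist (?f x) (?f y) = \<rho> * dist x y"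
      using cs unfolding contracting_similarity_def by blast
    have "dist (?f 1) (?f 0) = \<rho> * dist (1::complex) 0" using d by blast
    hence "cmod r = \<rho>" by (simp add: dist_norm)
    hence r0: "r \<noteq> 0" and r1: "cmod r < 1" using \<rho> by auto
    obtain p where "p \<ge> 1" "\<forall>t\<ge>1. as t = 0 \<longrightarrow> as (t + p) = 0"
      using part_a_core[OF n2 m0 as_digits Cchar inv r0 r1] by blast
    thus "SEP (\<lambda>j. m - \<bar>as j\<bar>)" by (intro sep_from_shift[OF m0 as_digits])
  next
    fix p :: nat and a u :: "nat \<Rightarrow> int"
    assume H: "p \<ge> 1 \<and> (\<forall>l\<in>{1..p}. u l \<ge> 0) \<and>
            (\<forall>l\<in>{1..p}. m - \<bar>as l\<bar> = a l) \<and>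
            (\<forall>k\<ge>1. \<forall>l\<in>{1..p}. m - \<bar>as (k * p + l)\<bar> = a l + u l)"
    have IA: "ifs_attractor
                {(\<lambda>x. (x + (\<Sum>l=1..p. of_int (y l) * bb n ^ (p - l) + of_int (z l) / bb n ^ l)
                          - \<gamma>) / bb n ^ p + \<gamma>)
                 | y z :: nat \<Rightarrow> int. \<forall>l\<in>{1..p}. y l \<in> {0, m} \<and> z l \<in> {0, m} \<and>
                                             y l \<le> a l \<and> z l \<le> u l}
                C\<alpha>"
      using H by (intro part_b[OF n2 m0 as_digits Cchar]) auto
    thus "ifs_attractor
                {(\<lambda>x. (x + (\<Sum>l=1..p. of_int (y l) * bb n ^ (p - l) + of_int (z l) / bb n ^ l)
                          - \<gamma>) / bb n ^ p + \<gamma>)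
                 | y z :: nat \<Rightarrow> int. \<forall>l\<in>{1..p}. y l \<in> {0, m} \<and> z l \<in> {0, m} \<and>
                                             y l \<le> a l \<and> z l \<le> u l}
                C\<alpha>" .
    thus "self_similar C\<alpha>" unfolding self_similar_def by blast
  qed
qed

end
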